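(* Let $\mathfrak{s}$ be a simple Lie superalgebra. If $\mathfrak{s}=\bigoplus\mathfrak{s}^p$ is a grading of depth one and $\mathrm{der}(\mathfrak{s})=\bigoplus \mathrm{der}^p(\mathfrak{s})$ the associated grading of $\mathrm{der}(\mathfrak{s})$, then: (i) if $x\in\mathrm{der}^p(\mathfrak{s})$, $p\geq 0$, satisfies $[x,\mathfrak{s}^{-1}]=(0)$ then $x=0$; (ii) $\mathfrak{s}^0$ and $\mathfrak{s}^1$ are nonzero; (iii) the adjoint action of $\mathfrak{s}^{0}$ on $\mathfrak{s}^{-1}$ is irreducible of $G$-type; (iv) the depth $d(\mathrm{der}(\mathfrak{s}))\geq d(\mathfrak{s})$ and if the grading operator $D\in\mathfrak{h}$ then $d(\mathrm{der}(\mathfrak{s}))=d(\mathfrak{s})$; (v) if $x\in\mathfrak{s}^{-1}$ satisfies $[\mathfrak{s}^{0},x]=(0)$ then $x=0$.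
   Context: $\mathfrak{s}$ is a finite-dimensional complex simple Lie superalgebra with $\mathrm{der}(\mathfrak{s})=\mathfrak{s}\rtimes\mathrm{out}(\mathfrak{s})$ (semidirect sum with the inner derivations $\mathfrak{s}$ as ideal and a subalgebra $\mathrm{out}(\mathfrak{s})$ of outer derivations). A maximal torus of $\mathfrak{s}$ is conjugate to $\mathfrak{t}_{\mathfrak{s}}=\mathfrak{h}\oplus\mathfrak{t}_o$ with $\mathfrak{h}$ maximal toric in $\mathfrak{s}_{\bar 0}$ and $\mathfrak{t}_o$ maximal toric in $\mathrm{out}_{\bar 0}(\mathfrak{s})$; gradings correspond to grading operators $D\in\mathfrak{t}_{\mathfrak{s}}$. A grading has depth $d$ if $\mathfrak{s}^{-d}\neq0$ and $\mathfrak{s}^{p}=0$ for $p<-d$. A representation is irreducible of $G$-type if it has no nontrivial submodule, $\mathbb{Z}_2$-graded or not. *)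

theory Defs
  imports Complex_Main
begin

definition par_space :: "'a set \<Rightarrow> 'a set \<Rightarrow> nat \<Rightarrow> 'a set" where
  "par_space S0 S1 i = (if even i then S0 else S1)"

definition lie_superalgebra ::
  "(complex \<Rightarrow> 'a::ab_group_add \<Rightarrow> 'a) \<Rightarrow> 'a set \<Rightarrow> 'a set \<Rightarrow> ('a \<Rightarrow> 'a \<Rightarrow> 'a) \<Rightarrow> bool" where
  "lie_superalgebra sc S0 S1 br \<longleftrightarrow>
     vector_space sc \<and>
     module.subspace sc S0 \<and> module.subspace sc S1 \<and> S0 \<inter> S1 = {0} \<and>
     (\<forall>x. \<exists>x0\<in>S0. \<exists>x1\<in>S1. x = x0 + x1) \<and>
     (\<forall>y. Vector_Spaces.linear sc sc (\<lambda>x. br x y)) \<and>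
     (\<forall>x. Vector_Spaces.linear sc sc (br x)) \<and>
     (\<forall>i j x y. x \<in> par_space S0 S1 i \<longrightarrow> y \<in> par_space S0 S1 j \<longrightarrow>
        br x y \<in> par_space S0 S1 (i + j)) \<and>
     (\<forall>i j x y. x \<in> par_space S0 S1 i \<longrightarrow> y \<in> par_space S0 S1 j \<longrightarrow>
        br x y = - sc ((-1) ^ (i * j)) (br y x)) \<and>
     (\<forall>i j x y z. x \<in> par_space S0 S1 i \<longrightarrow> y \<in> par_space S0 S1 j \<longrightarrow>
        br x (br y z) = br (br x y) z + sc ((-1) ^ (i * j)) (br y (br x z)))"

definition finite_dim :: "(complex \<Rightarrow> 'a::ab_group_add \<Rightarrow> 'a) \<Rightarrow> bool" where
  "finite_dim sc \<longleftrightarrow> (\<exists>B. finite_dimensional_vector_space sc B)"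

definition graded_ideal ::
  "(complex \<Rightarrow> 'a::ab_group_add \<Rightarrow> 'a) \<Rightarrow> 'a set \<Rightarrow> 'a set \<Rightarrow> ('a \<Rightarrow> 'a \<Rightarrow> 'a) \<Rightarrow> 'a set \<Rightarrow> bool" where
  "graded_ideal sc S0 S1 br I \<longleftrightarrow>
     module.subspace sc I \<and>
     (\<forall>x\<in>I. \<exists>x0\<in>I \<inter> S0. \<exists>x1\<in>I \<inter> S1. x = x0 + x1) \<and>
     (\<forall>x y. y \<in> I \<longrightarrow> br x y \<in> I)"

definition simple_lie_superalgebra ::
  "(complex \<Rightarrow> 'a::ab_group_add \<Rightarrow> 'a) \<Rightarrow> 'a set \<Rightarrow> 'a set \<Rightarrow> ('a \<Rightarrow> 'a \<Rightarrow> 'a) \<Rightarrow> bool" where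
  "simple_lie_superalgebra sc S0 S1 br \<longleftrightarrow>
     lie_superalgebra sc S0 S1 br \<and> finite_dim sc \<and>
     (\<exists>x y. br x y \<noteq> 0) \<and>
     (\<forall>I. graded_ideal sc S0 S1 br I \<longrightarrow> I = {0} \<or> I = UNIV)"

definition hom_derivation ::
  "(complex \<Rightarrow> 'a::ab_group_add \<Rightarrow> 'a) \<Rightarrow> 'a set \<Rightarrow> 'a set \<Rightarrow> ('a \<Rightarrow> 'a \<Rightarrow> 'a) \<Rightarrow> nat \<Rightarrow> ('a \<Rightarrow> 'a) \<Rightarrow> bool" where
  "hom_derivation sc S0 S1 br i \<phi> \<longleftrightarrow>
     Vector_Spaces.linear sc sc \<phi> \<and>
     (\<forall>j x. x \<in> par_space S0 S1 j \<longrightarrow> \<phi> x \<in> par_space S0 S1 (i + j)) \<and>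
     (\<forall>j x y. x \<in> par_space S0 S1 j \<longrightarrow>
        \<phi> (br x y) = br (\<phi> x) y + sc ((-1) ^ (i * j)) (br x (\<phi> y)))"

definition der ::
  "(complex \<Rightarrow> 'a::ab_group_add \<Rightarrow> 'a) \<Rightarrow> 'a set \<Rightarrow> 'a set \<Rightarrow> ('a \<Rightarrow> 'a \<Rightarrow> 'a) \<Rightarrow> ('a \<Rightarrow> 'a) set" where
  "der sc S0 S1 br = {\<phi>. \<exists>\<phi>0 \<phi>1. hom_derivation sc S0 S1 br 0 \<phi>0 \<and> hom_derivation sc S0 S1 br 1 \<phi>1 \<and>
                          \<phi> = (\<lambda>x. \<phi>0 x + \<phi>1 x)}"

definition grading_operator ::
  "(complex \<Rightarrow> 'a::ab_group_add \<Rightarrow> 'a) \<Rightarrow> 'a set \<Rightarrow> 'a set \<Rightarrow> ('a \<Rightarrow> 'a \<Rightarrow> 'a) \<Rightarrow> ('a \<Rightarrow> 'a) \<Rightarrow> bool" where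
  "grading_operator sc S0 S1 br D \<longleftrightarrow>
     hom_derivation sc S0 S1 br 0 D \<and>
     (\<forall>x. x \<in> module.span sc (\<Union>p::int. {v. D v = sc (of_int p) v}))"

definition grade :: "(complex \<Rightarrow> 'a::ab_group_add \<Rightarrow> 'a) \<Rightarrow> ('a \<Rightarrow> 'a) \<Rightarrow> int \<Rightarrow> 'a set" where
  "grade sc D p = {x. D x = sc (of_int p) x}"

text \<open>Associated grading of der(s): der^p = {phi in der. [D, phi] = p phi}
(D is even, so the bracket in der(s) is the ordinary commutator).\<close>
definition der_grade ::
  "(complex \<Rightarrow> 'a::ab_group_add \<Rightarrow> 'a) \<Rightarrow> 'a set \<Rightarrow> 'a set \<Rightarrow> ('a \<Rightarrow> 'a \<Rightarrow> 'a) \<Rightarrow> ('a \<Rightarrow> 'a) \<Rightarrow> int \<Rightarrow> ('a \<Rightarrow> 'a) set" where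
  "der_grade sc S0 S1 br D p =
     {\<phi> \<in> der sc S0 S1 br. (\<lambda>x. D (\<phi> x) - \<phi> (D x)) = (\<lambda>x. sc (of_int p) (\<phi> x))}"

definition has_depth :: "(int \<Rightarrow> 'b set) \<Rightarrow> 'b \<Rightarrow> int \<Rightarrow> bool" where
  "has_depth g z d \<longleftrightarrow> g (-d) \<noteq> {z} \<and> (\<forall>p < -d. g p = {z})"

definition ad_semisimple ::
  "(complex \<Rightarrow> 'a::ab_group_add \<Rightarrow> 'a) \<Rightarrow> ('a \<Rightarrow> 'a \<Rightarrow> 'a) \<Rightarrow> 'a \<Rightarrow> bool" where
  "ad_semisimple sc br t \<longleftrightarrow> (\<forall>x. x \<in> module.span sc (\<Union>c::complex. {v. br t v = sc c v}))"

definition toral ::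
  "(complex \<Rightarrow> 'a::ab_group_add \<Rightarrow> 'a) \<Rightarrow> 'a set \<Rightarrow> ('a \<Rightarrow> 'a \<Rightarrow> 'a) \<Rightarrow> 'a set \<Rightarrow> bool" where
  "toral sc S0 br T \<longleftrightarrow> module.subspace sc T \<and> T \<subseteq> S0 \<and>
     (\<forall>a\<in>T. \<forall>b\<in>T. br a b = 0) \<and> (\<forall>t\<in>T. ad_semisimple sc br t)"

definition maximal_toral ::
  "(complex \<Rightarrow> 'a::ab_group_add \<Rightarrow> 'a) \<Rightarrow> 'a set \<Rightarrow> ('a \<Rightarrow> 'a \<Rightarrow> 'a) \<Rightarrow> 'a set \<Rightarrow> bool" where
  "maximal_toral sc S0 br T \<longleftrightarrow> toral sc S0 br T \<and>
     (\<forall>T'. toral sc S0 br T' \<and> T \<subseteq> T' \<longrightarrow> T' = T)"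

text \<open>Irreducible of G-type: V nonzero and no submodule (Z2-graded or not)
other than 0 and V under the action of A.\<close>
definition G_irreducible ::
  "(complex \<Rightarrow> 'a::ab_group_add \<Rightarrow> 'a) \<Rightarrow> ('a \<Rightarrow> 'a \<Rightarrow> 'a) \<Rightarrow> 'a set \<Rightarrow> 'a set \<Rightarrow> bool" where
  "G_irreducible sc act A V \<longleftrightarrow> V \<noteq> {0} \<and>
     (\<forall>W. module.subspace sc W \<and> W \<subseteq> V \<and> (\<forall>a\<in>A. \<forall>w\<in>W. act a w \<in> W) \<longrightarrow> W = {0} \<or> W = V)"

end

theory Submission
  imports Defs
begin


lemma lin_facts:
  assumes "Vector_Spaces.linear sc sc f"
  shows "f (x + y) = f x + f y" "f (sc c x) = sc c (f x)" "f 0 = 0" "f (- x) = - f x"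
    "f (x - y) = f x - f y" "f (sum g A) = (\<Sum>a\<in>A. f (g a))"
proof -
  have mh: "module_hom sc sc f" using assms by (simp add: module_hom_iff_linear)
  show "f (x + y) = f x + f y" using module_hom.add[OF mh] .
  show "f (sc c x) = sc c (f x)" using module_hom.scale[OF mh] .
  show "f 0 = 0" using module_hom.zero[OF mh] .
  show "f (- x) = - f x" using module_hom.neg[OF mh] .
  show "f (x - y) = f x - f y" using module_hom.diff[OF mh] .
  show "f (sum g A) = (\<Sum>a\<in>A. f (g a))" using module_hom.sum[OF mh] .
qed

locale LSA =
  fixes sc :: "complex \<Rightarrow> 'a::ab_group_add \<Rightarrow> 'a" and S0 S1 :: "'a set" and br :: "'a \<Rightarrow> 'a \<Rightarrow> 'a"
  assumes lsa: "lie_superalgebra sc S0 S1 br"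
begin

lemma vs: "vector_space sc" using lsa by (simp add: lie_superalgebra_def)

sublocale vector_space sc by (rule vs)

lemma sub0: "subspace S0" and sub1: "subspace S1" and int01: "S0 \<inter> S1 = {0}"
  and decomp: "\<exists>x0\<in>S0. \<exists>x1\<in>S1. x = x0 + x1"
  and linL: "Vector_Spaces.linear sc sc (\<lambda>x. br x y)" and linR: "Vector_Spaces.linear sc sc (br x)"
  using lsa by (auto simp: lie_superalgebra_def)

lemma par0: "par_space S0 S1 0 = S0" and par1: "par_space S0 S1 1 = S1" and par2: "par_space S0 S1 2 = S0"
  by (auto simp: par_space_def)

lemma brcl: "\<And>i j x y. x \<in> par_space S0 S1 i \<Longrightarrow> y \<in> par_space S0 S1 j \<Longrightarrow> br x y \<in> par_space S0 S1 (i + j)"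
  and asym: "\<And>i j x y. x \<in> par_space S0 S1 i \<Longrightarrow> y \<in> par_space S0 S1 j \<Longrightarrow> br x y = - sc ((-1) ^ (i * j)) (br y x)"
  and jac: "\<And>i j x y z. x \<in> par_space S0 S1 i \<Longrightarrow> y \<in> par_space S0 S1 j \<Longrightarrow>
        br x (br y z) = br (br x y) z + sc ((-1) ^ (i * j)) (br y (br x z))"
  using lsa unfolding lie_superalgebra_def by blast+

lemma br00: "x \<in> S0 \<Longrightarrow> y \<in> S0 \<Longrightarrow> br x y \<in> S0"
  using brcl[of x 0 y 0] by (simp add: par0)
lemma br01: "x \<in> S0 \<Longrightarrow> y \<in> S1 \<Longrightarrow> br x y \<in> S1"
  using brcl[of x 0 y 1] by (simp add: par_space_def)
lemma br10: "x \<in> S1 \<Longrightarrow> y \<in> S0 \<Longrightarrow> br x y \<in> S1"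
  using brcl[of x 1 y 0] by (simp add: par_space_def)
lemma br11: "x \<in> S1 \<Longrightarrow> y \<in> S1 \<Longrightarrow> br x y \<in> S0"
  using brcl[of x 1 y 1] by (simp add: par_space_def)

lemma scm1: "sc (-1) v = - v" by simp


lemma dec0: "a \<in> S0 \<Longrightarrow> b \<in> S1 \<Longrightarrow> a + b = 0 \<Longrightarrow> a = 0 \<and> b = 0"
proof -
  assume a: "a \<in> S0" and b: "b \<in> S1" and ab: "a + b = 0"
  have "a = - b" using ab by (simp add: eq_neg_iff_add_eq_0)
  hence "a \<in> S1" using b subspace_neg[OF sub1] by simp
  hence "a = 0" using a int01 by blast
  thus ?thesis using ab by simp
qed

definition pr0 :: "'a \<Rightarrow> 'a" where "pr0 x = (THE a. a \<in> S0 \<and> x - a \<in> S1)"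
definition pr1 :: "'a \<Rightarrow> 'a" where "pr1 x = x - pr0 x"

lemma dec_unique: assumes "a \<in> S0" "b \<in> S1" "x = a + b" shows "pr0 x = a" "pr1 x = b"
proof -
  have "(THE a. a \<in> S0 \<and> x - a \<in> S1) = a"
  proof (rule the_equality)
    show "a \<in> S0 \<and> x - a \<in> S1" using assms by simp
    fix a' assume a': "a' \<in> S0 \<and> x - a' \<in> S1"
    have "(a' - a) + ((x - a') - b) = 0" using assms by (simp add: algebra_simps)
    moreover have "a' - a \<in> S0" using a' assms subspace_diff[OF sub0] by blast
    moreover have "(x - a') - b \<in> S1" using a' assms subspace_diff[OF sub1] by blast
    ultimately have "a' - a = 0" using dec0 by blast
    thus "a' = a" by simp
  qed
  thus "pr0 x = a" by (simp add: pr0_def)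
  thus "pr1 x = b" using assms by (simp add: pr1_def)
qed

lemma pr0_S0: "pr0 x \<in> S0" and pr1_S1: "pr1 x \<in> S1" and pr_sum: "pr0 x + pr1 x = x"
proof -
  obtain a b where "a \<in> S0" "b \<in> S1" "x = a + b" using decomp by blast
  thus "pr0 x \<in> S0" "pr1 x \<in> S1" "pr0 x + pr1 x = x" using dec_unique by auto
qed

lemma pr_of0: "x \<in> S0 \<Longrightarrow> pr0 x = x \<and> pr1 x = 0"
  using dec_unique[of x 0 x] subspace_0[OF sub1] by simp
lemma pr_of1: "x \<in> S1 \<Longrightarrow> pr0 x = 0 \<and> pr1 x = x"
  using dec_unique[of 0 x x] subspace_0[OF sub0] by simp

lemma pr_add: "pr0 (x + y) = pr0 x + pr0 y" "pr1 (x + y) = pr1 x + pr1 y"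
proof -
  have "x + y = (pr0 x + pr0 y) + (pr1 x + pr1 y)" using pr_sum[of x] pr_sum[of y] by (simp add: algebra_simps)
  moreover have "pr0 x + pr0 y \<in> S0" using subspace_add[OF sub0] pr0_S0 by blast
  moreover have "pr1 x + pr1 y \<in> S1" using subspace_add[OF sub1] pr1_S1 by blast
  ultimately show "pr0 (x + y) = pr0 x + pr0 y" "pr1 (x + y) = pr1 x + pr1 y" using dec_unique by blast+
qed

lemma pr_scale: "pr0 (sc c x) = sc c (pr0 x)" "pr1 (sc c x) = sc c (pr1 x)"
proof -
  have "sc c x = sc c (pr0 x) + sc c (pr1 x)" using pr_sum[of x] by (metis scale_right_distrib)
  moreover have "sc c (pr0 x) \<in> S0" using subspace_scale[OF sub0] pr0_S0 by blast
  moreover have "sc c (pr1 x) \<in> S1" using subspace_scale[OF sub1] pr1_S1 by blast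
  ultimately show "pr0 (sc c x) = sc c (pr0 x)" "pr1 (sc c x) = sc c (pr1 x)" using dec_unique by blast+
qed

lemma pr_zero: "pr0 0 = 0" "pr1 0 = 0" using pr_of0 subspace_0[OF sub0] by auto

lemma lin_pr0: "Vector_Spaces.linear sc sc pr0"
  by (auto simp: Vector_Spaces.linear_iff vs pr_add pr_scale)
lemma lin_pr1: "Vector_Spaces.linear sc sc pr1"
  by (auto simp: Vector_Spaces.linear_iff vs pr_add pr_scale)

lemmas bL = lin_facts[OF linL] and bR = lin_facts[OF linR]

lemma brL_add: "br (x + y) z = br x z + br y z" using bL(1) .
lemma brR_add: "br z (x + y) = br z x + br z y" using bR(1) .
lemma brL_sc: "br (sc c x) z = sc c (br x z)" using bL(2) .
lemma brR_sc: "br z (sc c x) = sc c (br z x)" using bR(2) .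
lemma br0L[simp]: "br 0 z = 0" using bL(3) .
lemma br0R[simp]: "br z 0 = 0" using bR(3) .
lemma brL_neg: "br (- x) z = - br x z" using bL(4) .
lemma brR_neg: "br z (- x) = - br z x" using bR(4) .
lemma brL_diff: "br (x - y) z = br x z - br y z" using bL(5) .
lemma brR_diff: "br z (x - y) = br z x - br z y" using bR(5) .
lemma brL_sum: "br (sum g A) z = (\<Sum>a\<in>A. br (g a) z)" using bL(6) .
lemma brR_sum: "br z (sum g A) = (\<Sum>a\<in>A. br z (g a))" using bR(6) .

lemmas bril = brL_add brR_add brL_neg brR_neg brL_diff brR_diff

lemma jac_h:
  "x \<in> S0 \<Longrightarrow> y \<in> S0 \<Longrightarrow> br x (br y z) = br (br x y) z + br y (br x z)"
  "x \<in> S0 \<Longrightarrow> y \<in> S1 \<Longrightarrow> br x (br y z) = br (br x y) z + br y (br x z)"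
  "x \<in> S1 \<Longrightarrow> y \<in> S0 \<Longrightarrow> br x (br y z) = br (br x y) z + br y (br x z)"
  "x \<in> S1 \<Longrightarrow> y \<in> S1 \<Longrightarrow> br x (br y z) = br (br x y) z - br y (br x z)"
  using jac[of x 0 y 0 z] jac[of x 0 y 1 z] jac[of x 1 y 0 z] jac[of x 1 y 1 z]
  by (auto simp: par_space_def)

lemma asym_h:
  "x \<in> S0 \<Longrightarrow> y \<in> S0 \<Longrightarrow> br x y = - br y x"
  "x \<in> S0 \<Longrightarrow> y \<in> S1 \<Longrightarrow> br x y = - br y x"
  "x \<in> S1 \<Longrightarrow> y \<in> S0 \<Longrightarrow> br x y = - br y x"
  "x \<in> S1 \<Longrightarrow> y \<in> S1 \<Longrightarrow> br x y = br y x"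
  using asym[of x 0 y 0] asym[of x 0 y 1] asym[of x 1 y 0] asym[of x 1 y 1]
  by (auto simp: par_space_def)

lemma jacobi_aux:
  assumes h: "x0 \<in> S0" "x1 \<in> S1" "y0 \<in> S0" "y1 \<in> S1"
  shows "br (x0 + x1) (br (y0 + y1) z) = br (br (x0 + x1) (y0 + y1)) z + br y0 (br (x0 + x1) z) + br y1 (br x0 z)
    - br y1 (br x1 z)"
proof -
  have "br (x0 + x1) (br (y0 + y1) z) = br x0 (br y0 z) + br x0 (br y1 z) + br x1 (br y0 z) + br x1 (br y1 z)"
    by (simp add: bril algebra_simps)
  also have "\<dots> = br (br (x0 + x1) (y0 + y1)) z + br y0 (br (x0 + x1) z) + br y1 (br x0 z) - br y1 (br x1 z)"
    apply (simp add: jac_h(1)[OF h(1,3)] jac_h(2)[OF h(1,4)] jac_h(3)[OF h(2,3)] jac_h(4)[OF h(2,4)])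
    apply (simp add: bril algebra_simps)
    done
  finally show ?thesis .
qed

lemma jacobi: "br x (br y z) = br (br x y) z + br (pr0 y) (br x z) + br (pr1 y) (br (pr0 x) z)
    - br (pr1 y) (br (pr1 x) z)"
  using jacobi_aux[OF pr0_S0 pr1_S1 pr0_S0 pr1_S1, of x x y y z] by (simp add: pr_sum)

lemma antisym_aux:
  assumes h: "x0 \<in> S0" "x1 \<in> S1" "y0 \<in> S0" "y1 \<in> S1"
  shows "br (x0 + x1) (y0 + y1) = - br y0 (x0 + x1) - br y1 x0 + br y1 x1"
proof -
  have "br (x0 + x1) (y0 + y1) = br x0 y0 + br x0 y1 + br x1 y0 + br x1 y1"
    by (simp add: bril algebra_simps)
  also have "\<dots> = - br y0 x0 - br y1 x0 - br y0 x1 + br y1 x1"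
    using asym_h(1)[OF h(1,3)] asym_h(2)[OF h(1,4)] asym_h(3)[OF h(2,3)] asym_h(4)[OF h(2,4)] by simp
  also have "\<dots> = - br y0 (x0 + x1) - br y1 x0 + br y1 x1"
    by (simp add: bril algebra_simps)
  finally show ?thesis .
qed

lemma antisym: "br x y = - br (pr0 y) x - br (pr1 y) (pr0 x) + br (pr1 y) (pr1 x)"
  using antisym_aux[OF pr0_S0 pr1_S1 pr0_S0 pr1_S1, of x x y y] by (simp add: pr_sum)

lemma pr_br: "pr0 (br x y) = br (pr0 x) (pr0 y) + br (pr1 x) (pr1 y)"
  "pr1 (br x y) = br (pr0 x) (pr1 y) + br (pr1 x) (pr0 y)"
proof -
  let ?x0 = "pr0 x" and ?x1 = "pr1 x" and ?y0 = "pr0 y" and ?y1 = "pr1 y"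
  have x: "x = ?x0 + ?x1" and y: "y = ?y0 + ?y1" using pr_sum by auto
  have h: "?x0 \<in> S0" "?x1 \<in> S1" "?y0 \<in> S0" "?y1 \<in> S1" using pr0_S0 pr1_S1 by auto
  have e: "br x y = (br ?x0 ?y0 + br ?x1 ?y1) + (br ?x0 ?y1 + br ?x1 ?y0)"
    using arg_cong2[OF x y, of br] by (simp add: bril algebra_simps)
  have a: "br ?x0 ?y0 + br ?x1 ?y1 \<in> S0" using br00 br11 h subspace_add[OF sub0] by blast
  have b: "br ?x0 ?y1 + br ?x1 ?y0 \<in> S1" using br01 br10 h subspace_add[OF sub1] by blast
  show "pr0 (br x y) = br (pr0 x) (pr0 y) + br (pr1 x) (pr1 y)"
    "pr1 (br x y) = br (pr0 x) (pr1 y) + br (pr1 x) (pr0 y)" using dec_unique[OF a b e] by auto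
qed

lemma hom_kill: assumes a: "a \<in> S0 \<or> a \<in> S1" and z: "br a v = 0" shows "br a (pr0 v) = 0" "br a (pr1 v) = 0"
proof -
  have e: "br a (pr0 v) + br a (pr1 v) = 0" using pr_sum[of v] z by (metis brR_add)
  show "br a (pr0 v) = 0" "br a (pr1 v) = 0"
  proof -
    { assume "a \<in> S0"
      hence "br a (pr0 v) \<in> S0" "br a (pr1 v) \<in> S1" using br00 br01 pr0_S0 pr1_S1 by auto
      hence "br a (pr0 v) = 0 \<and> br a (pr1 v) = 0" using dec0 e by blast }
    moreover
    { assume "a \<in> S1"
      hence "br a (pr1 v) \<in> S0" "br a (pr0 v) \<in> S1" using br10 br11 pr0_S0 pr1_S1 by auto
      moreover have "br a (pr1 v) + br a (pr0 v) = 0" using e by (simp add: add.commute)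
      ultimately have "br a (pr0 v) = 0 \<and> br a (pr1 v) = 0" using dec0 by blast }
    ultimately show "br a (pr0 v) = 0" "br a (pr1 v) = 0" using a by blast+
  qed
qed

end


locale SLSA = LSA +
  assumes simple: "simple_lie_superalgebra sc S0 S1 br"
begin

lemma nonab: "\<exists>x y. br x y \<noteq> 0" and gid: "\<And>I. graded_ideal sc S0 S1 br I \<Longrightarrow> I = {0} \<or> I = UNIV"
  and fdim: "finite_dim sc"
  using simple by (auto simp: simple_lie_superalgebra_def)

lemma center_zero: assumes z: "\<And>x. br x z = 0" shows "z = 0"
proof -
  let ?Z = "{z. \<forall>x. br x z = 0}"
  have "graded_ideal sc S0 S1 br ?Z"
    unfolding graded_ideal_def
  proof (intro conjI ballI allI impI)
    show "subspace ?Z" by (rule subspaceI) (auto simp: bril brR_sc)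
  next
    fix z assume z: "z \<in> ?Z"
    have "pr0 z \<in> ?Z \<and> pr1 z \<in> ?Z"
    proof (intro conjI CollectI allI)
      fix x
      have a: "br (pr0 x) z = 0" "br (pr1 x) z = 0" using z by auto
      have "br (pr0 x) (pr0 z) = 0" "br (pr1 x) (pr0 z) = 0" "br (pr0 x) (pr1 z) = 0" "br (pr1 x) (pr1 z) = 0"
        using hom_kill[OF _ a(1)] hom_kill[OF _ a(2)] pr0_S0 pr1_S1 by auto
      thus "br x (pr0 z) = 0" "br x (pr1 z) = 0" using pr_sum[of x] by (metis add.right_neutral brL_add)+
    qed
    thus "\<exists>x0\<in>?Z \<inter> S0. \<exists>x1\<in>?Z \<inter> S1. z = x0 + x1" using pr0_S0 pr1_S1
      by (intro bexI[of _ "pr0 z"] bexI[of _ "pr1 z"]) (auto simp: pr_sum)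
  next
    fix x y assume "y \<in> ?Z" thus "br x y \<in> ?Z" by simp
  qed
  hence "?Z = {0} \<or> ?Z = UNIV" by (rule gid)
  moreover have "?Z \<noteq> UNIV" using nonab by auto
  ultimately show ?thesis using z by auto
qed

definition P :: "'a \<Rightarrow> 'a" where "P x = pr0 x - pr1 x"

lemma P_pr: "pr0 (P x) = pr0 x" "pr1 (P x) = - pr1 x"
proof -
  have "P x = pr0 x + (- pr1 x)" by (simp add: P_def)
  moreover have "- pr1 x \<in> S1" using subspace_neg[OF sub1] pr1_S1 by blast
  ultimately show "pr0 (P x) = pr0 x" "pr1 (P x) = - pr1 x" using dec_unique pr0_S0 by blast+
qed

lemma PP[simp]: "P (P x) = x"
  unfolding P_def[of "P x"] by (simp add: P_pr pr_sum)

lemma P_add: "P (x + y) = P x + P y" by (simp add: P_def pr_add algebra_simps)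
lemma P_sc: "P (sc c x) = sc c (P x)" by (simp add: P_def pr_scale scale_right_diff_distrib)
lemma P_neg: "P (- x) = - P x" using P_sc[of "-1" x] by simp
lemma P_diff: "P (x - y) = P x - P y" by (metis P_add P_neg diff_conv_add_uminus)
lemma P_0[simp]: "P 0 = 0" by (simp add: P_def pr_zero)

lemma P_br: "P (br x y) = br (P x) (P y)"
proof -
  have "P (br x y) = br (pr0 x) (pr0 y) + br (pr1 x) (pr1 y) - (br (pr0 x) (pr1 y) + br (pr1 x) (pr0 y))"
    by (simp add: P_def pr_br)
  also have "\<dots> = br (P x) (P y)" by (simp add: P_def bril algebra_simps)
  finally show ?thesis .
qed

lemma P_pr1: "P (pr1 x) = - pr1 x" using pr_of1[OF pr1_S1] by (simp add: P_def)

lemma two_half: "sc (1/2) (w + w) = w"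
proof -
  have "w + w = sc 2 w" using scale_left_distrib[of 1 1 w] by simp
  thus ?thesis by simp
qed

lemma pr0_half: "pr0 v = sc (1/2) (v + P v)"
proof -
  have "v + P v = pr0 v + pr0 v" using pr_sum[of v] by (simp add: P_def algebra_simps)
  thus ?thesis using two_half by simp
qed

lemma pr1_half: "pr1 v = sc (1/2) (v - P v)"
proof -
  have "v - P v = pr1 v + pr1 v" using pr_sum[of v] by (simp add: P_def algebra_simps)
  thus ?thesis using two_half by simp
qed

lemma left_ideal:
  assumes I: "subspace I" and id: "\<And>x y. y \<in> I \<Longrightarrow> br x y \<in> I"
  shows "I = {0} \<or> I = UNIV"
proof -
  let ?J = "{x. pr0 x \<in> I \<and> pr1 x \<in> I}"
  have "graded_ideal sc S0 S1 br ?J"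
    unfolding graded_ideal_def
  proof (intro conjI ballI allI impI)
    show "subspace ?J"
      by (rule subspaceI) (auto simp: pr_zero pr_add pr_scale subspace_0[OF I] subspace_add[OF I] subspace_scale[OF I])
  next
    fix x assume x: "x \<in> ?J"
    have "pr0 x \<in> ?J \<inter> S0" "pr1 x \<in> ?J \<inter> S1"
      using x pr_of0[OF pr0_S0, of x] pr_of1[OF pr1_S1, of x] pr0_S0 pr1_S1 subspace_0[OF I] by auto
    thus "\<exists>x0\<in>?J \<inter> S0. \<exists>x1\<in>?J \<inter> S1. x = x0 + x1"
      by (intro bexI[of _ "pr0 x"] bexI[of _ "pr1 x"]) (auto simp: pr_sum)
  next
    fix x y assume "y \<in> ?J"
    thus "br x y \<in> ?J" by (simp add: pr_br id subspace_add[OF I])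
  qed
  hence J: "?J = {0} \<or> ?J = UNIV" by (rule gid)
  show ?thesis
  proof (cases "?J = UNIV")
    case True
    hence "\<And>x. x \<in> I" using pr_sum subspace_add[OF I] by (metis UNIV_I mem_Collect_eq)
    thus ?thesis by auto
  next
    case False
    hence J0: "?J = {0}" using J by blast
    have F1: "a = 0" if "a \<in> I" "P a \<in> I" for a
    proof -
      have "pr0 a \<in> I" "pr1 a \<in> I" using that subspace_add[OF I] subspace_diff[OF I] subspace_scale[OF I]
        by (simp_all add: pr0_half pr1_half)
      thus ?thesis using J0 by blast
    qed
    let ?K = "{x. \<exists>a\<in>I. \<exists>b\<in>I. x = a + P b}"
    have "graded_ideal sc S0 S1 br ?K"
      unfolding graded_ideal_def
    proof (intro conjI ballI allI impI)
      show "subspace ?K"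
      proof (rule subspaceI)
        show "0 \<in> ?K" using subspace_0[OF I] by force
      next
        fix x y assume "x \<in> ?K" "y \<in> ?K"
        then obtain a b a' b' where "a \<in> I" "b \<in> I" "a' \<in> I" "b' \<in> I" "x = a + P b" "y = a' + P b'" by blast
        thus "x + y \<in> ?K" using subspace_add[OF I]
          by (intro CollectI bexI[of _ "a + a'"] bexI[of _ "b + b'"]) (auto simp: P_add algebra_simps)
      next
        fix c x assume "x \<in> ?K"
        then obtain a b where "a \<in> I" "b \<in> I" "x = a + P b" by blast
        thus "sc c x \<in> ?K" using subspace_scale[OF I]
          by (intro CollectI bexI[of _ "sc c a"] bexI[of _ "sc c b"]) (auto simp: P_sc scale_right_distrib)
      qed
    next
      fix x assume "x \<in> ?K"
      then obtain a b where ab: "a \<in> I" "b \<in> I" "x = a + P b" by blast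
      have Px: "P x = b + P a" using ab by (simp add: P_add)
      have "pr0 x = sc (1/2) (a + b) + P (sc (1/2) (a + b))"
        by (simp add: pr0_half Px ab(3) P_sc P_add scale_right_distrib algebra_simps)
      moreover have "pr1 x = sc (1/2) (a - b) + P (sc (1/2) (b - a))"
        by (simp add: pr1_half Px ab(3) P_sc P_add P_diff scale_right_diff_distrib scale_right_distrib algebra_simps)
      ultimately have "pr0 x \<in> ?K" "pr1 x \<in> ?K" using ab subspace_add[OF I] subspace_diff[OF I] subspace_scale[OF I] by blast+
      thus "\<exists>x0\<in>?K \<inter> S0. \<exists>x1\<in>?K \<inter> S1. x = x0 + x1" using pr0_S0 pr1_S1
        by (intro bexI[of _ "pr0 x"] bexI[of _ "pr1 x"]) (auto simp only: pr_sum IntI)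
    next
      fix x y assume "y \<in> ?K"
      then obtain a b where ab: "a \<in> I" "b \<in> I" "y = a + P b" by blast
      have "br x y = br x a + P (br (P x) b)" by (simp add: ab(3) brR_add P_br)
      thus "br x y \<in> ?K" using ab id by blast
    qed
    hence K: "?K = {0} \<or> ?K = UNIV" by (rule gid)
    have IK: "I \<subseteq> ?K"
    proof
      fix x assume "x \<in> I" thus "x \<in> ?K" using subspace_0[OF I] by (intro CollectI bexI[of _ x] bexI[of _ 0]) auto
    qed
    show ?thesis
    proof (cases "?K = UNIV")
      case False
      hence "?K = {0}" using K by blast
      thus ?thesis using IK subspace_0[OF I] by blast
    next
      case True
      have v0: "br (pr1 a') (P a) = 0 \<and> br (pr1 a') a = 0" if a: "a \<in> I" "a' \<in> I" for a a'
      proof -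
        have "br a a' = - br (pr0 a') a - br (pr1 a') (P a)"
          using antisym[of a a'] by (simp add: P_def bril algebra_simps)
        hence "br a a' + br (pr1 a') (P a) = - br (pr0 a') a" by (simp add: algebra_simps)
        hence e: "br (pr1 a') (P a) = - br (pr0 a') a - br a a'" by (simp add: eq_diff_eq add.commute)
        have vI: "br (pr1 a') (P a) \<in> I" unfolding e using a id subspace_diff[OF I] subspace_neg[OF I] by simp
        have "P (br (pr1 a') (P a)) = - br (pr1 a') a" by (simp add: P_br P_pr1 brL_neg)
        hence "P (br (pr1 a') (P a)) \<in> I" using id a subspace_neg[OF I] by simp
        hence z: "br (pr1 a') (P a) = 0" using F1 vI by blast
        hence "P (br (pr1 a') (P a)) = 0" by simp
        hence "br (pr1 a') a = 0" by (simp add: P_br P_pr1 brL_neg)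
        thus ?thesis using z by simp
      qed
      have "a' = 0" if a': "a' \<in> I" for a'
      proof -
        have "br x (pr1 a') = 0" for x
        proof -
          obtain a b where ab: "a \<in> I" "b \<in> I" "x = a + P b" using True by blast
          have "br (pr1 a') x = 0" using v0[OF ab(1) a'] v0[OF ab(2) a'] ab(3) by (simp add: brR_add)
          hence "- br (pr0 x) (pr1 a') + br (pr1 x) (pr1 a') = 0"
            using antisym[of "pr1 a'" x] pr_of1[OF pr1_S1, of a'] by simp
          moreover have "br (pr0 x) (pr1 a') \<in> S1" "br (pr1 x) (pr1 a') \<in> S0"
            using br01 br11 pr0_S0 pr1_S1 by auto
          ultimately have "br (pr0 x) (pr1 a') = 0" "br (pr1 x) (pr1 a') = 0"
            using dec0[of "br (pr1 x) (pr1 a')" "- br (pr0 x) (pr1 a')"] subspace_neg[OF sub1]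
            by (auto simp: add.commute)
          thus ?thesis using pr_sum[of x] by (metis add.right_neutral brL_add)
        qed
        hence "pr1 a' = 0" using center_zero by blast
        hence "P a' = a'" using pr_sum[of a'] by (simp add: P_def)
        thus ?thesis using F1 a' by simp
      qed
      thus ?thesis using subspace_0[OF I] by blast
    qed
  qed
qed

end


context LSA begin

lemma sc_cancel: assumes "sc c x = 0" "c \<noteq> 0" shows "x = 0"
proof -
  have "sc (inverse c) (sc c x) = x" using assms(2) by simp
  thus ?thesis using assms(1) by simp
qed

lemma fam_decomp:
  assumes V: "\<And>q. subspace (V q)" and x: "x \<in> span (\<Union>q. V q)"
  shows "\<exists>F w. finite F \<and> (\<forall>q. w q \<in> V q) \<and> x = sum w F"
proof -
  let ?P = "\<lambda>x. \<exists>F w. finite F \<and> (\<forall>q. w q \<in> V q) \<and> x = sum w F"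
  have sub: "subspace (Collect ?P)"
  proof (rule subspaceI)
    show "0 \<in> Collect ?P" using subspace_0[OF V] by (intro CollectI exI[of _ "{}"] exI[of _ "\<lambda>_. 0"]) auto
  next
    fix x y assume "x \<in> Collect ?P" "y \<in> Collect ?P"
    then obtain F1 w1 F2 w2 where h: "finite F1" "\<forall>q. w1 q \<in> V q" "x = sum w1 F1"
      "finite F2" "\<forall>q. w2 q \<in> V q" "y = sum w2 F2" by auto
    let ?w = "\<lambda>q. (if q \<in> F1 then w1 q else 0) + (if q \<in> F2 then w2 q else 0)"
    have "sum ?w (F1 \<union> F2) = sum w1 ((F1 \<union> F2) \<inter> F1) + sum w2 ((F1 \<union> F2) \<inter> F2)"
      using h by (simp add: sum.distrib sum.inter_restrict[symmetric])
    also have "\<dots> = x + y" using h by (simp add: Int_absorb1)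
    finally have "x + y = sum ?w (F1 \<union> F2)" by simp
    moreover have "\<forall>q. ?w q \<in> V q" using h subspace_add[OF V] subspace_0[OF V] by auto
    ultimately show "x + y \<in> Collect ?P" using h(1,4)
      by (intro CollectI exI[of _ "F1 \<union> F2"] exI[of _ ?w]) simp
  next
    fix c x assume "x \<in> Collect ?P"
    then obtain F w where h: "finite F" "\<forall>q. w q \<in> V q" "x = sum w F" by auto
    have "sc c x = sum (\<lambda>q. sc c (w q)) F" using h by (simp add: scale_sum_right)
    moreover have "\<forall>q. sc c (w q) \<in> V q" using h subspace_scale[OF V] by auto
    ultimately show "sc c x \<in> Collect ?P" using h(1)
      by (intro CollectI exI[of _ F] exI[of _ "\<lambda>q. sc c (w q)"]) simp
  qed
  have base: "?P v" if vV: "v \<in> (\<Union>q. V q)" for v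
  proof -
    obtain q where q: "v \<in> V q" using vV by blast
    let ?w = "\<lambda>p. if p = q then v else 0"
    have "\<forall>p. ?w p \<in> V p" using q subspace_0[OF V] by auto
    moreover have "v = sum ?w {q}" by simp
    ultimately show ?thesis by (intro exI[of _ "{q}"] exI[of _ ?w]) simp
  qed
  show ?thesis by (rule span_induct[OF x sub base])
qed

end

locale GR = SLSA +
  fixes D :: "'a \<Rightarrow> 'a"
  assumes gradop: "grading_operator sc S0 S1 br D" and depth1: "has_depth (grade sc D) 0 1"
begin

abbreviation G where "G \<equiv> grade sc D"

lemma Dhom: "hom_derivation sc S0 S1 br 0 D"
  and Dspan: "x \<in> span (\<Union>p::int. {v. D v = sc (of_int p) v})"
  using gradop unfolding grading_operator_def by blast+

lemma Dlin: "Vector_Spaces.linear sc sc D" using Dhom by (simp add: hom_derivation_def)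
lemmas Df = lin_facts[OF Dlin]

lemma D_par: "\<And>j x. x \<in> par_space S0 S1 j \<Longrightarrow> D x \<in> par_space S0 S1 j"
  using Dhom by (simp add: hom_derivation_def)
lemma D_S0: "x \<in> S0 \<Longrightarrow> D x \<in> S0" using D_par[of x 0] by (simp add: par_space_def)
lemma D_S1: "x \<in> S1 \<Longrightarrow> D x \<in> S1" using D_par[of x 1] by (simp add: par_space_def)

lemma D_br: "D (br x y) = br (D x) y + br x (D y)"
proof -
  have h: "\<And>j x y. x \<in> par_space S0 S1 j \<Longrightarrow> D (br x y) = br (D x) y + br x (D y)"
    using Dhom unfolding hom_derivation_def by simp
  have "D (br (pr0 x) y) = br (D (pr0 x)) y + br (pr0 x) (D y)" using h[of "pr0 x" 0] pr0_S0 by (simp add: par_space_def)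
  moreover have "D (br (pr1 x) y) = br (D (pr1 x)) y + br (pr1 x) (D y)" using h[of "pr1 x" 1] pr1_S1 by (simp add: par_space_def)
  moreover have "br x y = br (pr0 x) y + br (pr1 x) y" using brL_add[of "pr0 x" "pr1 x" y] by (simp add: pr_sum)
  moreover have "D x = D (pr0 x) + D (pr1 x)" using Df(1)[of "pr0 x" "pr1 x"] by (simp add: pr_sum)
  moreover have "br x (D y) = br (pr0 x) (D y) + br (pr1 x) (D y)" using brL_add[of "pr0 x" "pr1 x" "D y"] by (simp add: pr_sum)
  ultimately show ?thesis by (simp add: Df(1) brL_add brR_add algebra_simps)
qed

lemma D_pr: "D (pr0 x) = pr0 (D x)" "D (pr1 x) = pr1 (D x)"
proof -
  have e: "D x = D (pr0 x) + D (pr1 x)" using Df(1)[of "pr0 x" "pr1 x"] by (simp add: pr_sum)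
  note d = dec_unique[OF D_S0[OF pr0_S0[of x]] D_S1[OF pr1_S1[of x]] e]
  show "D (pr0 x) = pr0 (D x)" "D (pr1 x) = pr1 (D x)" using d by simp_all
qed

lemma G_sub: "subspace (G q)"
  by (rule subspaceI) (auto simp: grade_def Df scale_right_distrib scale_left_commute)

lemma G_0: "0 \<in> G q" using subspace_0[OF G_sub] .

lemma G_pr: "x \<in> G q \<Longrightarrow> pr0 x \<in> G q" "x \<in> G q \<Longrightarrow> pr1 x \<in> G q"
  by (auto simp: grade_def D_pr pr_scale)

lemma G_br: "x \<in> G p \<Longrightarrow> y \<in> G q \<Longrightarrow> br x y \<in> G (p + q)"
  by (simp add: grade_def D_br brL_sc brR_sc scale_left_distrib)

lemma G_low: "p < -1 \<Longrightarrow> G p = {0}" and G_m1: "G (-1) \<noteq> {0}"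
  using depth1 by (auto simp: has_depth_def)

lemma G_lowD: "p < -1 \<Longrightarrow> x \<in> G p \<Longrightarrow> x = 0" using G_low by blast

lemma G_disj: assumes "x \<in> G p" "x \<in> G q" "p \<noteq> q" shows "x = 0"
proof -
  have "sc (of_int p) x = sc (of_int q) x" using assms by (simp add: grade_def)
  hence "sc (of_int p - of_int q) x = 0" by (simp add: scale_left_diff_distrib)
  thus ?thesis using assms(3) sc_cancel by simp
qed

lemma G_decomp: "\<exists>F w. finite F \<and> (\<forall>q. w q \<in> G q) \<and> x = sum w F"
proof -
  have "x \<in> span (\<Union>q. G q)" using Dspan[of x] by (simp add: grade_def)
  thus ?thesis by (rule fam_decomp[OF G_sub])
qed

lemma G_indep: "finite F \<Longrightarrow> (\<forall>q\<in>F. w q \<in> G q) \<Longrightarrow> sum w F = 0 \<Longrightarrow> \<forall>q\<in>F. w q = 0"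
proof (induction F arbitrary: w rule: finite_induct)
  case empty thus ?case by simp
next
  case (insert p F)
  have s: "w p + sum w F = 0" using insert by simp
  have "D (w p + sum w F) = 0" using s Df by simp
  hence s2: "sc (of_int p) (w p) + (\<Sum>q\<in>F. sc (of_int q) (w q)) = 0"
    using insert(4) by (simp add: Df grade_def)
  have "sc (of_int p) (w p + sum w F) = 0" using s by simp
  hence s3: "sc (of_int p) (w p) + (\<Sum>q\<in>F. sc (of_int p) (w q)) = 0"
    by (simp add: scale_right_distrib scale_sum_right)
  have a: "(\<Sum>q\<in>F. sc (of_int q) (w q)) = - sc (of_int p) (w p)"
    using s2 by (simp add: eq_neg_iff_add_eq_0 add.commute)
  have b: "(\<Sum>q\<in>F. sc (of_int p) (w q)) = - sc (of_int p) (w p)"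
    using s3 by (simp add: eq_neg_iff_add_eq_0 add.commute)
  have "(\<Sum>q\<in>F. sc (of_int q - of_int p) (w q)) = (\<Sum>q\<in>F. sc (of_int q) (w q)) - (\<Sum>q\<in>F. sc (of_int p) (w q))"
    by (simp add: scale_left_diff_distrib sum_subtractf)
  hence "(\<Sum>q\<in>F. sc (of_int q - of_int p) (w q)) = 0" using a b by simp
  moreover have "\<forall>q\<in>F. sc (of_int q - of_int p) (w q) \<in> G q"
    using insert(4) subspace_scale[OF G_sub] by auto
  ultimately have z: "\<forall>q\<in>F. sc (of_int q - of_int p) (w q) = 0"
    using insert.IH[of "\<lambda>q. sc (of_int q - of_int p) (w q)"] by simp
  have "\<forall>q\<in>F. w q = 0"
  proof
    fix q assume q: "q \<in> F"
    hence "(of_int q - of_int p :: complex) \<noteq> 0" using insert(2) by auto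
    thus "w q = 0" using z q sc_cancel by blast
  qed
  moreover hence "w p = 0" using s by simp
  ultimately show ?case by simp
qed

lemma vanish:
  assumes f: "Vector_Spaces.linear sc sc f" and z: "\<And>q x. x \<in> G q \<Longrightarrow> f x = 0"
  shows "f x = 0"
proof -
  obtain F w where "finite F" "\<forall>q. w q \<in> G q" "x = sum w F" using G_decomp by blast
  hence "f x = (\<Sum>q\<in>F. f (w q))" using lin_facts(6)[OF f] by simp
  also have "\<dots> = 0" using z \<open>\<forall>q. w q \<in> G q\<close> by (intro sum.neutral) blast
  finally show ?thesis .
qed

lemma all_in: assumes V: "subspace V" and h: "\<And>q. G q \<subseteq> V" shows "x \<in> V"
proof -
  obtain F w where "finite F" "\<forall>q. w q \<in> G q" "x = sum w F" using G_decomp by blast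
  thus ?thesis using h by (auto intro!: subspace_sum[OF V])
qed

lemma fin_grades: "finite {q. G q \<noteq> {0}}"
proof -
  obtain B where fd: "finite_dimensional_vector_space sc B" using fdim unfolding finite_dim_def by blast
  let ?Q = "{q. G q \<noteq> {0}}"
  define v where "v q = (SOME v. v \<in> G q \<and> v \<noteq> 0)" for q
  have v: "v q \<in> G q \<and> v q \<noteq> 0" if "q \<in> ?Q" for q
  proof -
    have "\<exists>v. v \<in> G q \<and> v \<noteq> 0" using that G_0 by blast
    thus ?thesis unfolding v_def by (rule someI_ex)
  qed
  have inj: "inj_on v ?Q"
  proof (rule inj_onI)
    fix p q assume "p \<in> ?Q" "q \<in> ?Q" "v p = v q"
    thus "p = q" using v[of p] v[of q] G_disj[of "v p" p q] by auto
  qed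
  have "\<not> dependent (v ` ?Q)"
  proof
    assume "dependent (v ` ?Q)"
    then obtain t u where t: "finite t" "t \<subseteq> v ` ?Q" "(\<Sum>x\<in>t. sc (u x) x) = 0" "\<exists>x\<in>t. u x \<noteq> 0"
      unfolding dependent_explicit by blast
    define Q' where "Q' = {q \<in> ?Q. v q \<in> t}"
    have tQ: "v ` Q' = t"
    proof
      show "t \<subseteq> v ` Q'"
      proof
        fix y assume y: "y \<in> t"
        then obtain q where "q \<in> ?Q" "y = v q" using t(2) by blast
        thus "y \<in> v ` Q'" using y unfolding Q'_def by blast
      qed
    qed (auto simp: Q'_def)
    have inj': "inj_on v Q'" using inj by (rule inj_on_subset) (auto simp: Q'_def)
    have "finite (v ` Q')" using t(1) by (simp only: tQ)
    hence fQ: "finite Q'" using finite_imageD[OF _ inj'] by blast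
    have "(\<Sum>x\<in>v ` Q'. sc (u x) x) = 0" using t(3) by (simp only: tQ)
    hence "(\<Sum>q\<in>Q'. sc (u (v q)) (v q)) = 0" using sum.reindex[OF inj', of "\<lambda>x. sc (u x) x"] by simp
    moreover have "\<forall>q\<in>Q'. sc (u (v q)) (v q) \<in> G q" using v subspace_scale[OF G_sub] by (auto simp: Q'_def)
    ultimately have z: "\<forall>q\<in>Q'. sc (u (v q)) (v q) = 0" using G_indep[OF fQ, of "\<lambda>q. sc (u (v q)) (v q)"] by simp
    have "\<forall>q\<in>Q'. u (v q) = 0"
    proof
      fix q assume q: "q \<in> Q'"
      show "u (v q) = 0"
      proof (rule ccontr)
        assume "u (v q) \<noteq> 0"
        hence "v q = 0" using z q sc_cancel by blast
        thus False using v[of q] q by (simp add: Q'_def)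
      qed
    qed
    thus False using t(4) tQ by blast
  qed
  hence "finite (v ` ?Q)" by (rule finite_dimensional_vector_space.finiteI_independent[OF fd])
  thus ?thesis by (rule finite_imageD[OF _ inj])
qed

lemma G_bound: "\<exists>N. \<forall>q>N. G q = {0}"
proof -
  let ?N = "Max (insert 0 {q. G q \<noteq> {0}})"
  have "\<forall>q>?N. G q = {0}"
  proof (intro allI impI)
    fix q assume q: "q > ?N"
    show "G q = {0}"
    proof (rule ccontr)
      assume "G q \<noteq> {0}"
      hence "q \<le> ?N" using fin_grades by (intro Max_ge) auto
      thus False using q by simp
    qed
  qed
  thus ?thesis by blast
qed

end


context GR begin

definition Iq :: "'a set \<Rightarrow> int \<Rightarrow> 'a set" where
  "Iq W q = {y \<in> G q. \<forall>zs. set zs \<subseteq> G (-1) \<and> length zs = nat (q + 1) \<longrightarrow> foldr br zs y \<in> W}"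

lemma adl_add: "foldr br zs (x + y) = foldr br zs x + foldr br zs y"
  by (induction zs) (auto simp: brR_add)
lemma adl_sc: "foldr br zs (sc c x) = sc c (foldr br zs x)"
  by (induction zs) (auto simp: brR_sc)
lemma adl_0: "foldr br zs 0 = 0"
  by (induction zs) auto

lemma Iq_sub: assumes W: "subspace W" shows "subspace (Iq W q)"
proof (rule subspaceI)
  show "0 \<in> Iq W q" using G_0 subspace_0[OF W] by (simp add: Iq_def adl_0)
next
  fix x y assume "x \<in> Iq W q" "y \<in> Iq W q"
  thus "x + y \<in> Iq W q" using subspace_add[OF W] subspace_add[OF G_sub] by (simp add: Iq_def adl_add)
next
  fix c x assume "x \<in> Iq W q"
  thus "sc c x \<in> Iq W q" using subspace_scale[OF W] subspace_scale[OF G_sub] by (simp add: Iq_def adl_sc)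
qed

lemma Iq_0: "subspace W \<Longrightarrow> 0 \<in> Iq W q" using Iq_sub subspace_0 by blast

lemma Iq_G: "y \<in> Iq W q \<Longrightarrow> y \<in> G q" by (simp add: Iq_def)

lemma Iq_m1: "y \<in> Iq W (-1) \<Longrightarrow> y \<in> W"
  unfolding Iq_def by (auto dest: spec[of _ "[]"])

lemma W_Iq: "W \<subseteq> G (-1) \<Longrightarrow> W \<subseteq> Iq W (-1)"
  unfolding Iq_def by auto

lemma Iq_step: assumes W: "subspace W" and z: "z \<in> G (-1)" and y: "y \<in> Iq W q"
  shows "br z y \<in> Iq W (q - 1)"
proof (cases "q \<ge> 0")
  case False
  have "br z y \<in> G (-1 + q)" using G_br z Iq_G[OF y] by blast
  hence "br z y = 0" using G_lowD[of "-1 + q"] False by simp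
  thus ?thesis using Iq_0[OF W] by simp
next
  case True
  have g: "br z y \<in> G (q - 1)" using G_br[OF z Iq_G[OF y]] by simp
  have "foldr br zs (br z y) \<in> W" if "set zs \<subseteq> G (-1)" "length zs = nat (q - 1 + 1)" for zs
  proof -
    have h: "\<And>zs. set zs \<subseteq> G (-1) \<Longrightarrow> length zs = nat (q+1) \<Longrightarrow> foldr br zs y \<in> W"
      using y by (auto simp: Iq_def)
    have "foldr br (zs @ [z]) y \<in> W" by (rule h) (use that z True in auto)
    thus ?thesis by simp
  qed
  thus ?thesis using g unfolding Iq_def by blast
qed

lemma Iq_triv:
  assumes W: "subspace W" and u: "u \<in> G k" and y: "y \<in> Iq W q" and c: "k < -1 \<or> q < -1 \<or> k + q < -1"
  shows "br u y \<in> Iq W (k + q)"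
proof -
  have "br u y = 0"
  proof -
    { assume "k < -1" hence "u = 0" using G_lowD u by blast hence ?thesis by simp }
    moreover
    { assume "q < -1" hence "y = 0" using G_lowD Iq_G[OF y] by blast hence ?thesis by simp }
    moreover
    { assume "k + q < -1" hence ?thesis using G_lowD G_br[OF u Iq_G[OF y]] by blast }
    ultimately show ?thesis using c by blast
  qed
  thus ?thesis using Iq_0[OF W] by simp
qed

lemma key:
  assumes W: "subspace W" "W \<subseteq> G (-1)" "\<And>a w. a \<in> G 0 \<Longrightarrow> w \<in> W \<Longrightarrow> br a w \<in> W"
  shows "nat (k + q + 1) = n \<Longrightarrow> u \<in> G k \<Longrightarrow> y \<in> Iq W q \<Longrightarrow> br u y \<in> Iq W (k + q)"
proof (induction n arbitrary: k q u y)
  case 0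
  show ?case
  proof (cases "k < -1 \<or> q < -1 \<or> k + q < -1")
    case True thus ?thesis using Iq_triv[OF W(1) 0(2,3)] by blast
  next
    case False
    hence kq: "k + q = -1" using 0(1) by simp
    have g: "br u y \<in> G (k + q)" using G_br[OF 0(2) Iq_G[OF 0(3)]] .
    have "br u y \<in> W"
    proof (cases "k = -1")
      case True
      hence q0: "q = 0" using kq by simp
      have h: "\<And>zs. set zs \<subseteq> G (-1) \<Longrightarrow> length zs = nat (q+1) \<Longrightarrow> foldr br zs y \<in> W"
        using 0(3) by (auto simp: Iq_def)
      have "foldr br [u] y \<in> W" by (rule h) (use 0(2) True q0 in auto)
      thus ?thesis by simp
    next
      case False
      hence "k = 0" "q = -1" using kq \<open>\<not> (k < -1 \<or> q < -1 \<or> k + q < -1)\<close> by auto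
      thus ?thesis using W(3) 0(2) Iq_m1[of y W] 0(3) by simp
    qed
    moreover have "nat (k + q + 1) = 0" using kq by simp
    ultimately show ?thesis using g unfolding Iq_def by auto
  qed
next
  case (Suc m)
  show ?case
  proof (cases "k < -1 \<or> q < -1 \<or> k + q < -1")
    case True thus ?thesis using Iq_triv[OF W(1) Suc(3,4)] by blast
  next
    case False
    hence kq: "k + q = int m" using Suc(2) by simp
    have g: "br u y \<in> G (k + q)" using G_br[OF Suc(3) Iq_G[OF Suc(4)]] .
    have "foldr br zs (br u y) \<in> W" if zs: "set zs \<subseteq> G (-1)" "length zs = nat (k + q + 1)" for zs
    proof -
      obtain zs' z where e: "zs = zs' @ [z]" using zs(2) kq by (cases zs rule: rev_exhaust) auto
      have z: "z \<in> G (-1)" and zs': "set zs' \<subseteq> G (-1)" "length zs' = m" using zs e kq by auto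
      have z0: "pr0 z \<in> G (-1)" and z1: "pr1 z \<in> G (-1)" using G_pr[OF z] by auto
      have u0: "pr0 u \<in> G k" and u1: "pr1 u \<in> G k" using G_pr[OF Suc(3)] by auto
      have t1: "br (br z u) y \<in> Iq W (k + q - 1)"
      proof -
        have "br z u \<in> G (k - 1)" using G_br[OF z Suc(3)] by simp
        moreover have "nat (k - 1 + q + 1) = m" using kq by simp
        ultimately have "br (br z u) y \<in> Iq W (k - 1 + q)" using Suc.IH Suc(4) by blast
        thus ?thesis by (simp add: algebra_simps)
      qed
      have t: "br u' (br z' y) \<in> Iq W (k + q - 1)" if u': "u' \<in> G k" and z': "z' \<in> G (-1)" for u' z'
      proof -
        have "br z' y \<in> Iq W (q - 1)" using Iq_step[OF W(1) z' Suc(4)] .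
        moreover have "nat (k + (q - 1) + 1) = m" using kq by simp
        ultimately have "br u' (br z' y) \<in> Iq W (k + (q - 1))" using Suc.IH u' by blast
        thus ?thesis by (simp add: algebra_simps)
      qed
      have "br z (br u y) \<in> Iq W (k + q - 1)"
        unfolding jacobi[of z u y]
        using t1 t[OF u0 z] t[OF u1 z0] t[OF u1 z1] subspace_add[OF Iq_sub[OF W(1)]] subspace_diff[OF Iq_sub[OF W(1)]]
        by simp
      moreover have "nat (k + q - 1 + 1) = m" using kq by simp
      ultimately have "foldr br zs' (br z (br u y)) \<in> W" using zs' unfolding Iq_def by auto
      thus ?thesis using e by simp
    qed
    thus ?thesis using g unfolding Iq_def by blast
  qed
qed

definition IW :: "'a set \<Rightarrow> 'a set" where "IW W = span (\<Union>q. Iq W q)"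

lemma IW_hom:
  assumes W1: "subspace W" and W2: "W \<subseteq> G (-1)" and W3: "\<And>a w. a \<in> G 0 \<Longrightarrow> w \<in> W \<Longrightarrow> br a w \<in> W"
    and u: "u \<in> G k" and y: "y \<in> IW W"
  shows "br u y \<in> IW W"
proof -
  have sub: "subspace {y. br u y \<in> IW W}"
    by (rule subspaceI) (auto simp: IW_def brR_add brR_sc span_add span_scale span_zero)
  have base: "br u y' \<in> IW W" if y': "y' \<in> (\<Union>q. Iq W q)" for y'
  proof -
    obtain q where q: "y' \<in> Iq W q" using y' by blast
    have "br u y' \<in> Iq W (k + q)"
      by (rule key[where n="nat (k + q + 1)"]) (use W1 W2 W3 u q in auto)
    thus "br u y' \<in> IW W" unfolding IW_def by (intro span_base) blast
  qed
  have ys: "y \<in> span (\<Union>q. Iq W q)" using y by (simp add: IW_def)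
  show ?thesis by (rule span_induct[OF ys sub base])
qed

lemma IW_ideal:
  assumes W1: "subspace W" and W2: "W \<subseteq> G (-1)" and W3: "\<And>a w. a \<in> G 0 \<Longrightarrow> w \<in> W \<Longrightarrow> br a w \<in> W"
    and y: "y \<in> IW W"
  shows "br x y \<in> IW W"
proof -
  obtain F u where Fu: "finite F" "\<forall>q. u q \<in> G q" "x = sum u F" using G_decomp by blast
  have "br x y = (\<Sum>k\<in>F. br (u k) y)" using Fu(3) by (simp add: brL_sum)
  moreover have "\<forall>k. br (u k) y \<in> IW W" using IW_hom[OF W1 W2 W3 _ y] Fu(2) by blast
  ultimately show ?thesis unfolding IW_def by (simp add: span_sum)
qed

lemma IW_full:
  assumes W1: "subspace W" and full: "IW W = UNIV"
  shows "G (-1) \<subseteq> W"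
proof
  fix x assume x: "x \<in> G (-1)"
  have xs: "x \<in> span (\<Union>q. Iq W q)" using full by (simp add: IW_def)
  have "\<exists>F w. finite F \<and> (\<forall>q. w q \<in> Iq W q) \<and> x = sum w F"
    by (rule fam_decomp[OF Iq_sub[OF W1] xs])
  then obtain F w where Fw: "finite F" "\<forall>q. w q \<in> Iq W q" "x = sum w F" by blast
  define w' where "w' q = (if q \<in> F then w q else 0) - (if q = -1 then x else 0)" for q
  have "sum w' (insert (-1) F) = sum (\<lambda>q. if q \<in> F then w q else 0) (insert (-1) F)
      - sum (\<lambda>q. if q = -1 then x else 0) (insert (-1) F)"
    unfolding w'_def by (rule sum_subtractf)
  also have "\<dots> = sum w F - x"
    using Fw(1) by (simp add: sum.inter_restrict[symmetric] Int_absorb1 Int_insert_left insert_absorb)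
  finally have s: "sum w' (insert (-1) F) = 0" using Fw(3) by simp
  have "\<forall>q. w' q \<in> G q"
  proof
    fix q
    have "w q \<in> G q" using Fw(2) Iq_G by blast
    hence a: "(if q \<in> F then w q else 0) \<in> G q" using G_0[of q] by simp
    have b: "(if q = -1 then x else 0) \<in> G q" using x G_0[of q] by simp
    show "w' q \<in> G q" unfolding w'_def by (rule subspace_diff[OF G_sub a b])
  qed
  hence "\<forall>q\<in>insert (-1) F. w' q = 0" using G_indep[of "insert (-1) F" w'] Fw(1) s by blast
  hence "w' (-1) = 0" by simp
  hence e: "(if -1 \<in> F then w (-1) else 0) = x" unfolding w'_def by simp
  show "x \<in> W"
  proof (cases "-1 \<in> F")
    case True
    hence "x = w (-1)" using e by simp
    thus ?thesis using Fw(2) Iq_m1 by blast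
  next
    case False
    thus ?thesis using e subspace_0[OF W1] by simp
  qed
qed

lemma irr:
  assumes W1: "subspace W" and W2: "W \<subseteq> G (-1)" and W3: "\<And>a w. a \<in> G 0 \<Longrightarrow> w \<in> W \<Longrightarrow> br a w \<in> W"
  shows "W = {0} \<or> W = G (-1)"
proof -
  have "IW W = {0} \<or> IW W = UNIV"
    by (rule left_ideal) (auto simp: IW_def intro: IW_ideal[OF W1 W2 W3, unfolded IW_def])
  moreover have "W \<subseteq> IW W" using W_Iq[OF W2] unfolding IW_def by (blast intro: span_base)
  ultimately show ?thesis using IW_full[OF W1] W2 subspace_0[OF W1] by blast
qed

lemma A_zero:
  assumes q: "q \<ge> 0" and a: "a \<in> G q" and k: "\<And>z. z \<in> G (-1) \<Longrightarrow> br z a = 0"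
  shows "a = 0"
proof -
  have W1: "subspace {0}" by simp
  have W2: "{0} \<subseteq> G (-1)" using G_0 by simp
  have W3: "\<And>b w. b \<in> G 0 \<Longrightarrow> w \<in> {0} \<Longrightarrow> br b w \<in> {0}" by simp
  have "a \<in> Iq {0} q"
    unfolding Iq_def
  proof (intro CollectI conjI allI impI)
    show "a \<in> G q" by (rule a)
    fix zs assume zs: "set zs \<subseteq> G (- 1) \<and> length zs = nat (q + 1)"
    then obtain zs' z where e: "zs = zs' @ [z]" using q by (cases zs rule: rev_exhaust) auto
    have "z \<in> G (-1)" using zs e by auto
    thus "foldr br zs a \<in> {0}" using e k adl_0 by simp
  qed
  hence aI: "a \<in> IW {0}" unfolding IW_def by (blast intro: span_base)
  have "IW {0} = {0} \<or> IW {0} = UNIV"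
    by (rule left_ideal) (auto simp: IW_def intro: IW_ideal[OF W1 W2 W3, unfolded IW_def])
  moreover have "IW {0} \<noteq> UNIV" using IW_full[OF W1] G_m1 G_0 by blast
  ultimately show ?thesis using aI by blast
qed

end


context GR begin

lemma par_sub: "subspace (par_space S0 S1 n)" by (simp add: par_space_def sub0 sub1)

lemma par_dec: assumes "u \<in> par_space S0 S1 n" "w \<in> par_space S0 S1 (Suc n)" "u + w = 0"
  shows "u = 0 \<and> w = 0"
proof (cases "even n")
  case True thus ?thesis using assms dec0 by (simp add: par_space_def)
next
  case False
  hence "w \<in> S0" "u \<in> S1" using assms by (auto simp: par_space_def)
  moreover have "w + u = 0" using assms(3) by (simp add: add.commute)
  ultimately show ?thesis using dec0 by blast
qed

lemma pr0_par: "pr0 z \<in> par_space S0 S1 0" and pr1_par: "pr1 z \<in> par_space S0 S1 1"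
  using pr0_S0 pr1_S1 by (auto simp: par_space_def)

lemma center_zero': assumes z: "\<And>v. br y v = 0" shows "y = 0"
proof -
  have a: "br (pr0 y) v = 0 \<and> br (pr1 y) v = 0" for v
  proof -
    have k: "br (pr0 y) (pr0 w) = 0 \<and> br (pr1 y) (pr0 w) = 0 \<and> br (pr0 y) (pr1 w) = 0 \<and> br (pr1 y) (pr1 w) = 0" for w
    proof -
      have e1: "br (pr0 y) (pr0 w) + br (pr1 y) (pr0 w) = 0" using z[of "pr0 w"] brL_add[of "pr0 y" "pr1 y" "pr0 w"] by (simp add: pr_sum)
      have e2: "br (pr1 y) (pr1 w) + br (pr0 y) (pr1 w) = 0" using z[of "pr1 w"] brL_add[of "pr0 y" "pr1 y" "pr1 w"] by (simp add: pr_sum add.commute)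
      have "br (pr0 y) (pr0 w) = 0 \<and> br (pr1 y) (pr0 w) = 0" using dec0[OF br00[OF pr0_S0 pr0_S0] br10[OF pr1_S1 pr0_S0] e1] .
      moreover have "br (pr1 y) (pr1 w) = 0 \<and> br (pr0 y) (pr1 w) = 0" using dec0[OF br11[OF pr1_S1 pr1_S1] br01[OF pr0_S0 pr1_S1] e2] .
      ultimately show ?thesis by simp
    qed
    have "br (pr0 y) v = br (pr0 y) (pr0 v) + br (pr0 y) (pr1 v)" using brR_add[of "pr0 y" "pr0 v" "pr1 v"] by (simp add: pr_sum)
    moreover have "br (pr1 y) v = br (pr1 y) (pr0 v) + br (pr1 y) (pr1 v)" using brR_add[of "pr1 y" "pr0 v" "pr1 v"] by (simp add: pr_sum)
    ultimately show ?thesis using k[of v] by simp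
  qed
  have "br v y = 0" for v using antisym[of v y] a[of v] a[of "pr0 v"] a[of "pr1 v"] by simp
  thus ?thesis using center_zero by blast
qed

lemma hom_der_ad: assumes a: "a \<in> par_space S0 S1 i" shows "hom_derivation sc S0 S1 br i (br a)"
  unfolding hom_derivation_def using linR brcl[OF a] jac[OF a] by blast

lemma hom_der_zero: "hom_derivation sc S0 S1 br i (\<lambda>_. 0)"
  unfolding hom_derivation_def
  by (auto simp: Vector_Spaces.linear_iff vs subspace_0[OF par_sub])

lemma zero_dg: "(\<lambda>_. 0) \<in> der_grade sc S0 S1 br D p"
  unfolding der_grade_def der_def
  using hom_der_zero[of 0] hom_der_zero[of 1] Df(3) by auto

lemma ad_dg: assumes y: "y \<in> G (-1)" shows "br y \<in> der_grade sc S0 S1 br D (-1)"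
proof -
  have "br y = (\<lambda>v. br (pr0 y) v + br (pr1 y) v)"
  proof
    fix v show "br y v = br (pr0 y) v + br (pr1 y) v" using brL_add[of "pr0 y" "pr1 y" v] by (simp add: pr_sum)
  qed
  hence "br y \<in> der sc S0 S1 br"
    unfolding der_def using hom_der_ad[OF pr0_par] hom_der_ad[OF pr1_par] by blast
  moreover have "(\<lambda>v. D (br y v) - br y (D v)) = (\<lambda>v. sc (of_int (-1)) (br y v))"
  proof
    fix v
    have "D y = sc (-1) y" using y by (simp add: grade_def)
    thus "D (br y v) - br y (D v) = sc (of_int (-1)) (br y v)" by (simp add: D_br brL_neg)
  qed
  ultimately show ?thesis unfolding der_grade_def by blast
qed

lemma ad_ne: "der_grade sc S0 S1 br D (-1) \<noteq> {\<lambda>_. 0}"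
proof -
  obtain y where y: "y \<in> G (-1)" "y \<noteq> 0" using G_m1 G_0 by blast
  have "br y \<noteq> (\<lambda>_. 0)" using center_zero' y(2) by metis
  thus ?thesis using ad_dg[OF y(1)] by blast
qed

lemma der_parts:
  assumes "x \<in> der_grade sc S0 S1 br D p"
  obtains \<phi>0 \<phi>1 where "hom_derivation sc S0 S1 br 0 \<phi>0" "hom_derivation sc S0 S1 br 1 \<phi>1"
    "x = (\<lambda>v. \<phi>0 v + \<phi>1 v)" "\<And>v. D (x v) - x (D v) = sc (of_int p) (x v)"
proof -
  have "x \<in> der sc S0 S1 br" and e: "(\<lambda>v. D (x v) - x (D v)) = (\<lambda>v. sc (of_int p) (x v))"
    using assms by (auto simp: der_grade_def)
  then obtain \<phi>0 \<phi>1 where "hom_derivation sc S0 S1 br 0 \<phi>0" "hom_derivation sc S0 S1 br 1 \<phi>1"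
    "x = (\<lambda>v. \<phi>0 v + \<phi>1 v)" unfolding der_def by blast
  moreover have "\<And>v. D (x v) - x (D v) = sc (of_int p) (x v)" using e by metis
  ultimately show ?thesis using that by blast
qed

lemma der_lin: "hom_derivation sc S0 S1 br 0 \<phi>0 \<Longrightarrow> hom_derivation sc S0 S1 br 1 \<phi>1 \<Longrightarrow>
   Vector_Spaces.linear sc sc (\<lambda>v. \<phi>0 v + \<phi>1 v)"
  unfolding hom_derivation_def Vector_Spaces.linear_iff
  by (auto simp: vs algebra_simps scale_right_distrib)

lemma dg_maps: assumes "x \<in> der_grade sc S0 S1 br D p" "z \<in> G q" shows "x z \<in> G (q + p)"
proof -
  obtain \<phi>0 \<phi>1 where h: "hom_derivation sc S0 S1 br 0 \<phi>0" "hom_derivation sc S0 S1 br 1 \<phi>1"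
    "x = (\<lambda>v. \<phi>0 v + \<phi>1 v)" "\<And>v. D (x v) - x (D v) = sc (of_int p) (x v)"
    using der_parts[OF assms(1)] by blast
  have lin: "Vector_Spaces.linear sc sc x" using der_lin[OF h(1,2)] h(3) by simp
  have "D (x z) = x (D z) + sc (of_int p) (x z)" using h(4)[of z] by (metis add.commute diff_add_cancel)
  also have "\<dots> = sc (of_int q) (x z) + sc (of_int p) (x z)" using assms(2) lin_facts(2)[OF lin] by (simp add: grade_def)
  finally show ?thesis by (simp add: grade_def scale_left_distrib)
qed

lemma dg_lin: "x \<in> der_grade sc S0 S1 br D p \<Longrightarrow> Vector_Spaces.linear sc sc x"
  using der_parts der_lin by metis

end


context GR begin

lemma hd_rule: "hom_derivation sc S0 S1 br i \<phi> \<Longrightarrow> a \<in> par_space S0 S1 j \<Longrightarrow>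
    \<phi> (br a b) = br (\<phi> a) b + sc ((-1) ^ (i * j)) (br a (\<phi> b))"
  unfolding hom_derivation_def by blast
lemma hd_par: "hom_derivation sc S0 S1 br i \<phi> \<Longrightarrow> a \<in> par_space S0 S1 j \<Longrightarrow> \<phi> a \<in> par_space S0 S1 (i + j)"
  unfolding hom_derivation_def by blast
lemma hd_lin: "hom_derivation sc S0 S1 br i \<phi> \<Longrightarrow> Vector_Spaces.linear sc sc \<phi>"
  unfolding hom_derivation_def by blast

lemma part_i:
  assumes p: "p \<ge> 0" and x: "x \<in> der_grade sc S0 S1 br D p" and k: "\<forall>y\<in>G (-1). x y = 0"
  shows "x = (\<lambda>_. 0)"
proof -
  obtain \<phi>0 \<phi>1 where h: "hom_derivation sc S0 S1 br 0 \<phi>0" "hom_derivation sc S0 S1 br 1 \<phi>1"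
    "x = (\<lambda>v. \<phi>0 v + \<phi>1 v)" "\<And>v. D (x v) - x (D v) = sc (of_int p) (x v)"
    using der_parts[OF x] by blast
  have lin: "Vector_Spaces.linear sc sc x" using dg_lin[OF x] .
  note l0 = lin_facts[OF hd_lin[OF h(1)]] and l1 = lin_facts[OF hd_lin[OF h(2)]]
  have yh: "\<phi>0 y = 0 \<and> \<phi>1 y = 0" if "y \<in> G (-1)" "y \<in> par_space S0 S1 j" for y j
  proof -
    have "\<phi>0 y + \<phi>1 y = 0" using k that h(3) by simp
    moreover have "\<phi>0 y \<in> par_space S0 S1 j" using hd_par[OF h(1) that(2)] by simp
    moreover have "\<phi>1 y \<in> par_space S0 S1 (Suc j)" using hd_par[OF h(2) that(2)] by simp
    ultimately show ?thesis using par_dec by blast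
  qed
  have y0: "\<phi>0 y = 0 \<and> \<phi>1 y = 0" if y: "y \<in> G (-1)" for y
  proof -
    have a: "\<phi>0 (pr0 y) = 0 \<and> \<phi>1 (pr0 y) = 0" using yh[OF G_pr(1)[OF y] pr0_par] .
    have b: "\<phi>0 (pr1 y) = 0 \<and> \<phi>1 (pr1 y) = 0" using yh[OF G_pr(2)[OF y] pr1_par] .
    have "\<phi>0 y = \<phi>0 (pr0 y) + \<phi>0 (pr1 y)" "\<phi>1 y = \<phi>1 (pr0 y) + \<phi>1 (pr1 y)"
      using l0(1)[of "pr0 y" "pr1 y"] l1(1)[of "pr0 y" "pr1 y"] by (simp_all add: pr_sum)
    thus ?thesis using a b by simp
  qed
  have main: "\<forall>z\<in>G (int n - 1). x z = 0" for n
  proof (induction n)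
    case 0 thus ?case using k by simp
  next
    case (Suc m)
    have zh: "x zh = 0" if zh: "zh \<in> G (int m)" "zh \<in> par_space S0 S1 j" for zh j
    proof -
      let ?w = "x zh"
      have wG: "?w \<in> G (int m + p)" using dg_maps[OF x zh(1)] .
      have yk: "br y ?w = 0" if y: "y \<in> G (-1)" "y \<in> par_space S0 S1 j'" for y j'
      proof -
        have "br y zh \<in> G (int m - 1)" using G_br[OF y(1) zh(1)] by simp
        hence "x (br y zh) = 0" using Suc.IH by blast
        moreover have "x (br y zh) = br y (\<phi>0 zh) + sc ((-1) ^ j') (br y (\<phi>1 zh))"
          using hd_rule[OF h(1) y(2), of zh] hd_rule[OF h(2) y(2), of zh] y0[OF y(1)] h(3) by simp
        moreover have "br y (\<phi>0 zh) \<in> par_space S0 S1 (j' + j)"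
          using brcl[OF y(2) hd_par[OF h(1) zh(2)]] by simp
        moreover have "sc ((-1) ^ j') (br y (\<phi>1 zh)) \<in> par_space S0 S1 (Suc (j' + j))"
          using brcl[OF y(2) hd_par[OF h(2) zh(2)]] subspace_scale[OF par_sub] by simp
        ultimately have "br y (\<phi>0 zh) = 0 \<and> sc ((-1) ^ j') (br y (\<phi>1 zh)) = 0" using par_dec by metis
        hence "br y (\<phi>0 zh) = 0" "br y (\<phi>1 zh) = 0" using sc_cancel[of "(-1) ^ j'"] by auto
        thus ?thesis using h(3) by (simp add: brR_add)
      qed
      have "br y ?w = 0" if y: "y \<in> G (-1)" for y
      proof -
        have "br (pr0 y) ?w = 0" using yk[OF G_pr(1)[OF y] pr0_par] .
        moreover have "br (pr1 y) ?w = 0" using yk[OF G_pr(2)[OF y] pr1_par] .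
        moreover have "br y ?w = br (pr0 y) ?w + br (pr1 y) ?w" using brL_add[of "pr0 y" "pr1 y" ?w] by (simp add: pr_sum)
        ultimately show ?thesis by simp
      qed
      thus ?thesis using A_zero[OF _ wG] p by simp
    qed
    show ?case
    proof
      fix z assume "z \<in> G (int (Suc m) - 1)"
      hence z: "z \<in> G (int m)" by simp
      have "x z = x (pr0 z) + x (pr1 z)" using lin_facts(1)[OF lin, of "pr0 z" "pr1 z"] by (simp add: pr_sum)
      thus "x z = 0" using zh[OF G_pr(1)[OF z] pr0_par] zh[OF G_pr(2)[OF z] pr1_par] by simp
    qed
  qed
  have "x v = 0" for v
  proof (rule vanish[OF lin])
    fix q z assume z: "z \<in> G q"
    show "x z = 0"
    proof (cases "q < -1")
      case True thus ?thesis using G_lowD z lin_facts(3)[OF lin] by blast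
    next
      case False
      hence "q = int (nat (q + 1)) - 1" by simp
      thus ?thesis using main[of "nat (q + 1)"] z by metis
    qed
  qed
  thus ?thesis by (rule ext)
qed

lemma pos_zero: assumes s: "m \<ge> 0" "G m = {0}" shows "\<forall>q\<ge>m. G q = {0}"
proof -
  have gz: "G (m + int n) = {0}" for n
  proof (induction n)
    case 0 thus ?case using s by simp
  next
    case (Suc n)
    have "a = 0" if a: "a \<in> G (m + int (Suc n))" for a
    proof (rule A_zero[OF _ a])
      show "0 \<le> m + int (Suc n)" using s by simp
      fix z assume z: "z \<in> G (-1)"
      have "br z a \<in> G (m + int n)" using G_br[OF z a] by (simp add: algebra_simps)
      thus "br z a = 0" using Suc.IH by blast
    qed
    thus ?case using G_0 by blast
  qed
  show ?thesis
  proof (intro allI impI)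
    fix q assume "q \<ge> m"
    hence "q = m + int (nat (q - m))" by simp
    thus "G q = {0}" using gz[of "nat (q - m)"] by simp
  qed
qed

lemma part_ii0: "G 0 \<noteq> {0}"
proof
  assume z: "G 0 = {0}"
  have all: "x \<in> G (-1)" for x
  proof (rule all_in[OF G_sub])
    fix q show "G q \<subseteq> G (-1)"
    proof (cases "q \<ge> 0")
      case True thus ?thesis using pos_zero[of 0] z G_0 by auto
    next
      case False
      show ?thesis
      proof (cases "q = -1")
        case False thus ?thesis using \<open>\<not> q \<ge> 0\<close> G_low[of q] G_0 by auto
      qed simp
    qed
  qed
  obtain x y where "br x y \<noteq> 0" using nonab by blast
  moreover have "br x y \<in> G (-1 + -1)" using G_br[OF all all] .
  ultimately show False using G_lowD[of "-1 + -1"] by simp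
qed

lemma part_ii1: "G 1 \<noteq> {0}"
proof
  assume z: "G 1 = {0}"
  have hi: "\<And>q. q \<ge> 1 \<Longrightarrow> G q = {0}" using pos_zero[of 1] z by auto
  have "G (-1) = {0} \<or> G (-1) = UNIV"
  proof (rule left_ideal[OF G_sub])
    fix x y assume y: "y \<in> G (-1)"
    obtain F u where Fu: "finite F" "\<forall>q. u q \<in> G q" "x = sum u F" using G_decomp by blast
    have bk: "br (u k) y \<in> G (-1)" for k
    proof (cases "k = 0")
      case True
      have "u k \<in> G k" using Fu(2) by blast
      thus ?thesis using G_br[OF _ y, of "u k" k] True by simp
    next
      case False
      have "br (u k) y = 0"
      proof (cases "k \<ge> 1")
        case True
        have "u k \<in> G k" using Fu(2) by blast
        hence "u k = 0" using hi[OF True] by blast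
        thus ?thesis by simp
      next
        case False
        hence "k - 1 < -1" using \<open>k \<noteq> 0\<close> by simp
        moreover have "br (u k) y \<in> G (k + -1)" using G_br[OF _ y, of "u k" k] Fu(2) by blast
        ultimately show ?thesis using G_lowD[of "k + -1" "br (u k) y"] by simp
      qed
      thus ?thesis using G_0 by simp
    qed
    have e: "br x y = (\<Sum>k\<in>F. br (u k) y)" using Fu(3) by (simp add: brL_sum)
    have "(\<Sum>k\<in>F. br (u k) y) \<in> G (-1)" by (rule subspace_sum[OF G_sub], rule bk)
    thus "br x y \<in> G (-1)" using e by simp
  qed
  moreover have "G (-1) \<noteq> UNIV"
  proof
    assume "G (-1) = UNIV"
    have "G 0 \<subseteq> {0}"
    proof
      fix v assume "v \<in> G 0"
      moreover have "v \<in> G (-1)" using \<open>G (-1) = UNIV\<close> by simp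
      ultimately have "v = 0" using G_disj[of v 0 "-1"] by simp
      thus "v \<in> {0}" by simp
    qed
    thus False using part_ii0 G_0[of 0] by blast
  qed
  ultimately show False using G_m1 by simp
qed

lemma part_iii: "G_irreducible sc br (G 0) (G (-1))"
  unfolding G_irreducible_def
proof (intro conjI allI impI)
  show "G (-1) \<noteq> {0}" by (rule G_m1)
  fix W assume W: "subspace W \<and> W \<subseteq> G (-1) \<and> (\<forall>a\<in>G 0. \<forall>w\<in>W. br a w \<in> W)"
  show "W = {0} \<or> W = G (-1)"
  proof (rule irr)
    show "subspace W" "W \<subseteq> G (-1)" using W by auto
    fix a w assume "a \<in> G 0" "w \<in> W" thus "br a w \<in> W" using W by blast
  qed
qed

lemma part_v: assumes x: "x \<in> G (-1)" and k: "\<forall>y\<in>G 0. br y x = 0" shows "x = 0"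
proof -
  have main: "\<forall>u\<in>G (int n). br u x = 0" for n
  proof (induction n)
    case 0 thus ?case using k by simp
  next
    case (Suc m)
    show ?case
    proof
      fix u assume u: "u \<in> G (int (Suc m))"
      let ?v = "br u x"
      have vG: "?v \<in> G (int m)" using G_br[OF u x] by simp
      have "br z ?v = 0" if z: "z \<in> G (-1)" for z
      proof -
        have zx: "br z' x = 0" if "z' \<in> G (-1)" for z'
          using G_br[OF that x] G_lowD[of "-1 + -1"] by simp
        have "br z u \<in> G (int m)" using G_br[OF z u] by simp
        hence "br (br z u) x = 0" using Suc.IH by blast
        thus ?thesis using jacobi[of z u x] zx[OF z] zx[OF G_pr(1)[OF z]] zx[OF G_pr(2)[OF z]] by simp
      qed
      thus "br u x = 0" using A_zero[OF _ vG] by simp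
    qed
  qed
  have "br u x = 0" for u
  proof (rule vanish[OF linL])
    fix q z assume z: "z \<in> G q"
    show "br z x = 0"
    proof (cases "q \<ge> 0")
      case True thus ?thesis using main[of "nat q"] z by simp
    next
      case False
      hence "q + -1 < -1" by simp
      thus ?thesis using G_br[OF z x] G_lowD[of "q + -1" "br z x"] by simp
    qed
  qed
  thus ?thesis using center_zero by blast
qed

end


context GR begin

lemma der_bound: "\<exists>M\<ge>1. \<forall>p < -M. der_grade sc S0 S1 br D p = {\<lambda>_. 0}"
proof -
  obtain N where N: "\<forall>q>N. G q = {0}" using G_bound by blast
  define M where "M = max N 0 + 1"
  have "der_grade sc S0 S1 br D p = {\<lambda>_. 0}" if p: "p < -M" for p
  proof
    show "{\<lambda>_. 0} \<subseteq> der_grade sc S0 S1 br D p" using zero_dg by simp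
    show "der_grade sc S0 S1 br D p \<subseteq> {\<lambda>_. 0}"
    proof
      fix x assume x: "x \<in> der_grade sc S0 S1 br D p"
      have lin: "Vector_Spaces.linear sc sc x" using dg_lin[OF x] .
      have "x v = 0" for v
      proof (rule vanish[OF lin])
        fix q z assume z: "z \<in> G q"
        show "x z = 0"
        proof (cases "q > N")
          case True
          hence "z = 0" using N z by blast
          thus ?thesis using lin_facts(3)[OF lin] by simp
        next
          case False
          hence "q + p < -1" using p by (simp add: M_def)
          thus ?thesis using dg_maps[OF x z] G_lowD[of "q + p" "x z"] by simp
        qed
      qed
      hence "x = (\<lambda>_. 0)" by (rule ext)
      thus "x \<in> {\<lambda>_. 0}" by simp
    qed
  qed
  moreover have "M \<ge> 1" by (simp add: M_def)
  ultimately show ?thesis by blast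
qed

lemma part_iv1: "\<exists>d\<ge>1. has_depth (der_grade sc S0 S1 br D) (\<lambda>_. 0) d"
proof -
  obtain M where M: "M \<ge> 1" "\<forall>p < -M. der_grade sc S0 S1 br D p = {\<lambda>_. 0}" using der_bound by blast
  define S where "S = {d::int. 1 \<le> d \<and> d \<le> M \<and> der_grade sc S0 S1 br D (-d) \<noteq> {\<lambda>_. 0}}"
  have fS: "finite S" unfolding S_def by (rule finite_subset[of _ "{1..M}"]) auto
  have 1: "1 \<in> S" unfolding S_def using M(1) ad_ne by simp
  define d where "d = Max S"
  have dS: "d \<in> S" unfolding d_def using fS 1 Max_in by blast
  have dge: "\<forall>e\<in>S. e \<le> d" unfolding d_def using fS by simp
  have "has_depth (der_grade sc S0 S1 br D) (\<lambda>_. 0) d"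
    unfolding has_depth_def
  proof (intro conjI allI impI)
    show "der_grade sc S0 S1 br D (-d) \<noteq> {\<lambda>_. 0}" using dS by (simp add: S_def)
    fix p assume p: "p < -d"
    show "der_grade sc S0 S1 br D p = {\<lambda>_. 0}"
    proof (cases "-p \<le> M")
      case True
      show ?thesis
      proof (rule ccontr)
        assume "der_grade sc S0 S1 br D p \<noteq> {\<lambda>_. 0}"
        hence "-p \<in> S" using True p dS by (simp add: S_def)
        thus False using dge p by force
      qed
    next
      case False thus ?thesis using M(2) by simp
    qed
  qed
  moreover have "d \<ge> 1" using dS by (simp add: S_def)
  ultimately show ?thesis by blast
qed

lemma part_iv2:
  assumes "\<exists>H h. maximal_toral sc S0 br H \<and> h \<in> H \<and> D = br h"
  shows "has_depth (der_grade sc S0 S1 br D) (\<lambda>_. 0) 1"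
proof -
  obtain H h where Hh: "maximal_toral sc S0 br H" "h \<in> H" "D = br h" using assms by blast
  have h0: "h \<in> S0" using Hh(1,2) by (auto simp: maximal_toral_def toral_def)
  have hp: "h \<in> par_space S0 S1 0" using h0 by (simp add: par_space_def)
  have prh: "pr0 h = h" "pr1 h = 0" using pr_of0[OF h0] by auto
  have "der_grade sc S0 S1 br D p = {\<lambda>_. 0}" if p: "p < -1" for p
  proof
    show "{\<lambda>_. 0} \<subseteq> der_grade sc S0 S1 br D p" using zero_dg by simp
    show "der_grade sc S0 S1 br D p \<subseteq> {\<lambda>_. 0}"
    proof
      fix x assume x: "x \<in> der_grade sc S0 S1 br D p"
      obtain \<phi>0 \<phi>1 where h: "hom_derivation sc S0 S1 br 0 \<phi>0" "hom_derivation sc S0 S1 br 1 \<phi>1"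
        "x = (\<lambda>v. \<phi>0 v + \<phi>1 v)" "\<And>v. D (x v) - x (D v) = sc (of_int p) (x v)"
        using der_parts[OF x] by blast
      have lin: "Vector_Spaces.linear sc sc x" using dg_lin[OF x] .
      have xr: "x (br h v) = br (x h) v + br h (x v)" for v
        using hd_rule[OF h(1) hp, of v] hd_rule[OF h(2) hp, of v] h(3) by (simp add: brL_add brR_add)
      define y where "y = x h"
      have e1: "br y v = - sc (of_int p) (x v)" for v
      proof -
        have "sc (of_int p) (x v) = br h (x v) - x (br h v)" using h(4)[of v] Hh(3) by simp
        also have "\<dots> = - br y v" using xr[of v] by (simp add: y_def)
        finally show ?thesis by simp
      qed
      have "br (br h y - sc (of_int p) y) v = 0" for v
      proof -
        have j: "br h (br y v) = br (br h y) v + br y (br h v)"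
          using jacobi[of h y v] prh by (simp add: brL_add[symmetric] pr_sum)
        have "br (br h y) v = br h (br y v) - br y (br h v)" using j by simp
        also have "\<dots> = - sc (of_int p) (br h (x v) - x (br h v))"
          by (simp add: e1 brR_neg brR_sc scale_right_diff_distrib)
        also have "\<dots> = - sc (of_int p) (sc (of_int p) (x v))" using h(4)[of v] Hh(3) by simp
        also have "\<dots> = br (sc (of_int p) y) v" by (simp add: brL_sc e1)
        finally show ?thesis by (simp add: brL_diff)
      qed
      hence "br h y - sc (of_int p) y = 0" by (rule center_zero')
      hence "y \<in> G p" using Hh(3) by (simp add: grade_def)
      hence y0: "y = 0" using G_lowD p by blast
      have "x v = 0" for v
      proof -
        have "sc (of_int p) (x v) = 0" using e1[of v] y0 by simp
        thus ?thesis using sc_cancel p by simp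
      qed
      hence "x = (\<lambda>_. 0)" by (rule ext)
      thus "x \<in> {\<lambda>_. 0}" by simp
    qed
  qed
  thus ?thesis unfolding has_depth_def using ad_ne by simp
qed

end

theorem lemma3p10:
  fixes sc :: "complex \<Rightarrow> 'a::ab_group_add \<Rightarrow> 'a"
    and S0 S1 :: "'a set"
    and br :: "'a \<Rightarrow> 'a \<Rightarrow> 'a"
    and D :: "'a \<Rightarrow> 'a"
  assumes simple: "simple_lie_superalgebra sc S0 S1 br"
    and gradop: "grading_operator sc S0 S1 br D"
    and depth1: "has_depth (grade sc D) 0 1"
  shows "(\<forall>p x. p \<ge> 0 \<longrightarrow> x \<in> der_grade sc S0 S1 br D p \<longrightarrow>
                (\<forall>y \<in> grade sc D (-1). x y = 0) \<longrightarrow> x = (\<lambda>_. 0))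
       \<and> grade sc D 0 \<noteq> {0} \<and> grade sc D 1 \<noteq> {0}
       \<and> G_irreducible sc br (grade sc D 0) (grade sc D (-1))
       \<and> (\<exists>d \<ge> 1. has_depth (der_grade sc S0 S1 br D) (\<lambda>_. 0) d)
       \<and> ((\<exists>H h. maximal_toral sc S0 br H \<and> h \<in> H \<and> D = br h) \<longrightarrow>
            has_depth (der_grade sc S0 S1 br D) (\<lambda>_. 0) 1)
       \<and> (\<forall>x \<in> grade sc D (-1). (\<forall>y \<in> grade sc D 0. br y x = 0) \<longrightarrow> x = 0)"
proof -
  have lsa: "lie_superalgebra sc S0 S1 br" using simple by (simp add: simple_lie_superalgebra_def)
  interpret GR sc S0 S1 br D
    by (intro GR.intro SLSA.intro SLSA_axioms.intro GR_axioms.intro LSA.intro lsa simple gradop depth1)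
  show ?thesis
    using part_i part_ii0 part_ii1 part_iii part_iv1 part_iv2 part_v by blast
qed

end
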